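(* Let $n\ge1$, $p<-n$, let $\mathcal{S}$ be a discrete subgroup of $O(n+1)$ satisfying the spanning property, and let $f$ be a positive $\mathcal{S}$-invariant function on $\mathbb{S}^n$ with $0<c_1\le f\le c_2$. There is a constant $C_n>0$ depending only on $n$ such that for every $\Omega\in\mathcal{K}_p(\mathcal{S})$ with support function $h$, $$h(x)\ge\Big[(-p)^n\cdot C_n\cdot\gamma_{\max}(\mathcal{S})\cdot\frac{\max_{\mathbb{S}^n}f}{\min_{\mathbb{S}^n}f}\Big]^{\frac{1}{n+p}}\qquad\forall x\in\mathbb{S}^n.$$
   Context: $\mathcal{K}_p(\mathcal{S})=\{\Omega\in\mathcal{K}_0(\mathcal{S}):\int_{\mathbb{S}^n}fh_\Omega^p=\int_{\mathbb{S}^n}f\}$, with $\mathcal{K}_0(\mathcal{S})$ the $\mathcal{S}$-invariant convex bodies in $\mathbb{R}^{n+1}$ containing the origin. $\gamma_{\max}(\mathcal{S})=\sup_{a\in\mathbb{S}^n}\gamma_a$, $\gamma_a=\max_{\mathbb{S}^n}h_a/\min_{\mathbb{S}^n}h_a$ with $h_a$ the support function of $P_a=\mathrm{conv}\{\phi(a):\phi\in\mathcal{S}\}$. Spanning property: every $P_a$, $a\in\mathbb{S}^n$, is a non-degenerate $(n+1)$-dimensional polytope. *)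

theory Defs
  imports "HOL-Analysis.Analysis"
begin

text \<open>The unit sphere S^n in the (n+1)-dimensional Euclidean space 'a.\<close>
abbreviation usphere :: "'a::euclidean_space set" where
  "usphere \<equiv> sphere 0 1"

text \<open>Integral over the unit sphere with respect to the surface measure, expressed via the
  cone-volume identity  int_{S^n} g d sigma = (n+1) int_{B^{n+1}} g(x/|x|) dx.\<close>
definition sphere_integral :: "('a::euclidean_space \<Rightarrow> real) \<Rightarrow> real" where
  "sphere_integral g =
     real DIM('a) * (\<integral>x. indicator (ball (0::'a) 1) x * g (x /\<^sub>R norm x) \<partial>lebesgue)"

definition support_fun :: "'a::euclidean_space set \<Rightarrow> 'a \<Rightarrow> real" where
  "support_fun K x = (SUP y\<in>K. x \<bullet> y)"

definition orth_subgroup :: "('a::euclidean_space \<Rightarrow> 'a) set \<Rightarrow> bool" where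
  "orth_subgroup S \<longleftrightarrow>
     (\<forall>\<phi>\<in>S. orthogonal_transformation \<phi>) \<and> id \<in> S \<and>
     (\<forall>\<phi>\<in>S. \<forall>\<psi>\<in>S. \<phi> \<circ> \<psi> \<in> S) \<and>
     (\<forall>\<phi>\<in>S. \<exists>\<psi>\<in>S. \<psi> \<circ> \<phi> = id)"

text \<open>Discreteness in the (operator-norm / uniform on the unit ball) topology of O(n+1):
  every element of S is isolated.\<close>
definition discrete_maps :: "('a::euclidean_space \<Rightarrow> 'a) set \<Rightarrow> bool" where
  "discrete_maps S \<longleftrightarrow>
     (\<forall>\<phi>\<in>S. \<exists>e>0. \<forall>\<psi>\<in>S. \<psi> \<noteq> \<phi> \<longrightarrow> (\<exists>x. norm x \<le> 1 \<and> dist (\<psi> x) (\<phi> x) \<ge> e))"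

definition orbit_polytope :: "('a::euclidean_space \<Rightarrow> 'a) set \<Rightarrow> 'a \<Rightarrow> 'a set" where
  "orbit_polytope S a = convex hull ((\<lambda>\<phi>. \<phi> a) ` S)"

definition spanning_property :: "('a::euclidean_space \<Rightarrow> 'a) set \<Rightarrow> bool" where
  "spanning_property S \<longleftrightarrow>
     (\<forall>a\<in>usphere. polytope (orbit_polytope S a) \<and>
                   aff_dim (orbit_polytope S a) = int DIM('a))"

definition gamma_a :: "('a::euclidean_space \<Rightarrow> 'a) set \<Rightarrow> 'a \<Rightarrow> real" where
  "gamma_a S a = (SUP x\<in>usphere. support_fun (orbit_polytope S a) x) /
                 (INF x\<in>usphere. support_fun (orbit_polytope S a) x)"

definition gamma_max :: "('a::euclidean_space \<Rightarrow> 'a) set \<Rightarrow> real" where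
  "gamma_max S = (SUP a\<in>usphere. gamma_a S a)"

definition K0 :: "('a::euclidean_space \<Rightarrow> 'a) set \<Rightarrow> 'a set set" where
  "K0 S = {\<Omega>. compact \<Omega> \<and> convex \<Omega> \<and> interior \<Omega> \<noteq> {} \<and> 0 \<in> \<Omega> \<and>
              (\<forall>\<phi>\<in>S. \<phi> ` \<Omega> = \<Omega>)}"

definition Kp :: "real \<Rightarrow> ('a::euclidean_space \<Rightarrow> real) \<Rightarrow> ('a \<Rightarrow> 'a) set \<Rightarrow> 'a set set" where
  "Kp p f S = {\<Omega>\<in>K0 S.
     sphere_integral (\<lambda>x. f x * support_fun \<Omega> x powr p) = sphere_integral f}"

end

theory Submission
  imports Defs
begin

lemma unit_not_open_segment:
  fixes x a b :: "'a::euclidean_space"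
  assumes "norm x = 1" "norm a \<le> 1" "norm b \<le> 1"
  shows "x \<notin> open_segment a b"
proof
  assume "x \<in> open_segment a b"
  then obtain u where ab: "a \<noteq> b" and u: "0 < u" "u < 1" and x: "x = (1 - u) *\<^sub>R a + u *\<^sub>R b"
    by (auto simp: in_segment)
  have id: "norm x ^ 2 = (1-u) * norm a ^ 2 + u * norm b ^ 2 - u * (1-u) * norm (a - b) ^ 2"
  proof -
    have e1: "x \<bullet> x = (1-u)*(1-u)*(a \<bullet> a) + 2*u*(1-u)*(a \<bullet> b) + u*u*(b \<bullet> b)"
      unfolding x by (simp add: inner_add_left inner_add_right inner_commute[of b a] ring_distribs)
    have e2: "(a - b) \<bullet> (a - b) = a \<bullet> a - 2 * (a \<bullet> b) + b \<bullet> b"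
      by (simp add: inner_diff_left inner_diff_right inner_commute[of b a])
    show ?thesis unfolding power2_norm_eq_inner e1 e2 by (simp add: algebra_simps)
  qed
  have "norm (a - b) > 0" using ab by simp
  then have "u * (1-u) * norm (a - b) ^ 2 > 0" using u by simp
  moreover have "norm a ^ 2 \<le> 1" "norm b ^ 2 \<le> 1" using assms by (auto simp: power_le_one)
  moreover have "(1-u) * norm a ^ 2 \<le> 1 - u" "u * norm b ^ 2 \<le> u"
    using u \<open>norm a ^ 2 \<le> 1\<close> \<open>norm b ^ 2 \<le> 1\<close> by (auto simp: mult_left_le)
  ultimately have "norm x ^ 2 < 1" using id u by linarith
  then show False using assms by simp
qed


lemma orth_S:
  assumes "orth_subgroup S"
  shows "\<And>\<phi>. \<phi> \<in> S \<Longrightarrow> orthogonal_transformation \<phi>" "id \<in> S"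
    "\<And>\<phi> \<psi>. \<phi> \<in> S \<Longrightarrow> \<psi> \<in> S \<Longrightarrow> \<phi> \<circ> \<psi> \<in> S"
  using assms unfolding orth_subgroup_def by blast+

lemma orbit_finite:
  fixes S :: "('a::euclidean_space \<Rightarrow> 'a) set"
  assumes "orth_subgroup S" "spanning_property S" "a \<in> usphere"
  shows "finite ((\<lambda>\<phi>. \<phi> a) ` S)"
proof -
  let ?O = "(\<lambda>\<phi>. \<phi> a) ` S"
  have pol: "polytope (convex hull ?O)"
  proof -
    have "\<forall>a\<in>usphere. polytope (orbit_polytope S a) \<and> aff_dim (orbit_polytope S a) = int DIM('a)"
      using assms(2) unfolding spanning_property_def .
    then have "polytope (orbit_polytope S a)" using assms(3) by blast
    then show ?thesis unfolding orbit_polytope_def .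
  qed
  then obtain T where T: "finite T" "convex hull ?O = convex hull T"
    unfolding polytope_def by blast
  have unit: "norm q = 1" if "q \<in> ?O" for q
  proof -
    from that obtain \<phi> where "\<phi> \<in> S" "q = \<phi> a" by blast
    moreover have "orthogonal_transformation \<phi>" using orth_S(1)[OF assms(1)] \<open>\<phi> \<in> S\<close> .
    ultimately show ?thesis using assms(3) by (simp add: orthogonal_transformation_norm)
  qed
  have sub: "convex hull ?O \<subseteq> cball 0 1"
    by (rule hull_minimal) (use unit in auto)
  have "q \<in> T" if "q \<in> ?O" for q
  proof -
    have "q extreme_point_of (convex hull ?O)"
      unfolding extreme_point_of_def
    proof (intro conjI ballI)
      show "q \<in> convex hull ?O" using that by (rule hull_inc)
      fix y z assume "y \<in> convex hull ?O" "z \<in> convex hull ?O"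
      then have "y \<in> cball 0 1" "z \<in> cball 0 1" using sub by blast+
      then have "norm y \<le> 1" "norm z \<le> 1" by simp_all
      then show "q \<notin> open_segment y z"
        using unit[OF that] by (intro unit_not_open_segment)
    qed
    then have "q extreme_point_of (convex hull T)" unfolding T(2) .
    then show ?thesis by (rule extreme_point_of_convex_hull)
  qed
  then have "?O \<subseteq> T" by (rule subsetI)
  then show ?thesis using T(1) by (rule finite_subset)
qed


lemma orth_inner:
  assumes "orthogonal_transformation f"
  shows "f v \<bullet> f w = v \<bullet> w"
  using assms unfolding orthogonal_transformation_def by blast

lemma orth_linear:
  assumes "orthogonal_transformation f"
  shows "linear f"
  using assms unfolding orthogonal_transformation_def by blast

lemma span_obstruction:
  fixes S :: "('a::euclidean_space \<Rightarrow> 'a) set"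
  assumes "spanning_property S" "subspace V" "dim V < DIM('a)" "w \<in> usphere"
    and inV: "\<And>\<phi>. \<phi> \<in> S \<Longrightarrow> \<phi> w \<in> V"
  shows False
proof -
  have "\<forall>a\<in>usphere. polytope (orbit_polytope S a) \<and> aff_dim (orbit_polytope S a) = int DIM('a)"
    using assms(1) unfolding spanning_property_def .
  then have eq: "aff_dim (orbit_polytope S w) = int DIM('a)" using assms(4) by blast
  have "(\<lambda>\<phi>. \<phi> w) ` S \<subseteq> V" using inV by blast
  then have "aff_dim ((\<lambda>\<phi>. \<phi> w) ` S) \<le> aff_dim V" by (rule aff_dim_subset)
  also have "\<dots> = int (dim V)" using assms(2) by (rule aff_dim_subspace)
  finally have "aff_dim (orbit_polytope S w) \<le> int (dim V)"
    unfolding orbit_polytope_def aff_dim_convex_hull .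
  then show False using eq assms(3) by linarith
qed

lemma quad_zero:
  fixes b g :: real
  assumes "\<And>t. 0 \<le> 2 * t * b + t^2 * g" "0 \<le> g"
  shows "b = 0"
proof (rule ccontr)
  assume "b \<noteq> 0"
  define t where "t = - b / (g + 1)"
  have gp: "g + 1 > 0" using assms(2) by simp
  have "2 * t * b + t^2 * g = (b^2 / (g+1)^2) * (g - 2 * (g + 1))"
  proof -
    have ne: "g + 1 \<noteq> 0" using gp by simp
    show ?thesis unfolding t_def power2_eq_square using ne
      by (simp add: divide_simps) (simp add: algebra_simps)
  qed
  also have "\<dots> < 0"
    using \<open>b \<noteq> 0\<close> gp assms(2) by (intro mult_pos_neg) auto
  finally show False using assms(1)[of t] by linarith
qed


lemma orbit_perm:
  fixes S :: "('a::euclidean_space \<Rightarrow> 'a) set"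
  assumes S: "orth_subgroup S" and fin: "finite ((\<lambda>\<phi>. \<phi> a) ` S)" and \<psi>: "\<psi> \<in> S"
  shows "\<psi> ` ((\<lambda>\<phi>. \<phi> a) ` S) = (\<lambda>\<phi>. \<phi> a) ` S"
    and "inj_on \<psi> ((\<lambda>\<phi>. \<phi> a) ` S)"
proof -
  have inj: "inj \<psi>" using orth_S(1)[OF S \<psi>] by (rule orthogonal_transformation_inj)
  then show "inj_on \<psi> ((\<lambda>\<phi>. \<phi> a) ` S)" by (rule inj_on_subset) simp
  moreover have "\<psi> ` ((\<lambda>\<phi>. \<phi> a) ` S) \<subseteq> (\<lambda>\<phi>. \<phi> a) ` S"
  proof
    fix y assume "y \<in> \<psi> ` ((\<lambda>\<phi>. \<phi> a) ` S)"
    then obtain \<phi> where "\<phi> \<in> S" "y = \<psi> (\<phi> a)" by blast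
    then have "y = (\<psi> \<circ> \<phi>) a" "\<psi> \<circ> \<phi> \<in> S" using orth_S(3)[OF S \<psi>] by auto
    then show "y \<in> (\<lambda>\<phi>. \<phi> a) ` S" by blast
  qed
  ultimately show "\<psi> ` ((\<lambda>\<phi>. \<phi> a) ` S) = (\<lambda>\<phi>. \<phi> a) ` S"
    using fin endo_inj_surj by blast
qed

lemma orbit_sum_invariant:
  fixes S :: "('a::euclidean_space \<Rightarrow> 'a) set"
  assumes S: "orth_subgroup S" and fin: "finite ((\<lambda>\<phi>. \<phi> a) ` S)" and \<psi>: "\<psi> \<in> S"
  shows "(\<Sum>q\<in>(\<lambda>\<phi>. \<phi> a) ` S. F (\<psi> q)) = (\<Sum>q\<in>(\<lambda>\<phi>. \<phi> a) ` S. (F q :: 'b::comm_monoid_add))"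
proof -
  have "(\<Sum>q\<in>(\<lambda>\<phi>. \<phi> a) ` S. F (\<psi> q)) = (\<Sum>q\<in>\<psi> ` ((\<lambda>\<phi>. \<phi> a) ` S). F q)"
    using orbit_perm(2)[OF S fin \<psi>] by (simp add: sum.reindex)
  also have "\<dots> = (\<Sum>q\<in>(\<lambda>\<phi>. \<phi> a) ` S. F q)"
    using orbit_perm(1)[OF S fin \<psi>] by simp
  finally show ?thesis .
qed


lemma centroid_zero:
  fixes S :: "('a::euclidean_space \<Rightarrow> 'a) set"
  assumes S: "orth_subgroup S" "spanning_property S" and dim: "DIM('a) \<ge> 2"
    and a: "a \<in> usphere"
  shows "(\<Sum>q\<in>(\<lambda>\<phi>. \<phi> a) ` S. q) = 0"
proof (rule ccontr)
  let ?O = "(\<lambda>\<phi>. \<phi> a) ` S"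
  define c where "c = (\<Sum>q\<in>?O. q)"
  assume "(\<Sum>q\<in>?O. q) \<noteq> 0"
  then have c0: "c \<noteq> 0" unfolding c_def .
  have fin: "finite ?O" using orbit_finite[OF S a] .
  define w where "w = c /\<^sub>R norm c"
  have wu: "w \<in> usphere" using c0 unfolding w_def by simp
  have fixw: "\<psi> w = w" if "\<psi> \<in> S" for \<psi>
  proof -
    have lin: "linear \<psi>" using orth_linear[OF orth_S(1)[OF S(1) that]] .
    have "\<psi> c = (\<Sum>q\<in>?O. \<psi> q)" unfolding c_def using lin by (rule linear_sum)
    also have "\<dots> = c" unfolding c_def using orbit_sum_invariant[OF S(1) fin that, of "\<lambda>x. x"] by simp
    finally have "\<psi> c = c" .
    then show ?thesis unfolding w_def using lin by (simp add: linear_scale)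
  qed
  have "dim (span {w}) \<le> card {w}" by (rule dim_le_card) auto
  then have "dim (span {w}) < DIM('a)" using dim by simp
  then show False
    using span_obstruction[OF S(2) subspace_span _ wu, of "{w}"] fixw
    by (simp add: span_base)
qed


lemma orbit_unit:
  fixes S :: "('a::euclidean_space \<Rightarrow> 'a) set"
  assumes S: "orth_subgroup S" and a: "a \<in> usphere" and q: "q \<in> (\<lambda>\<phi>. \<phi> a) ` S"
  shows "norm q = 1"
proof -
  from q obtain \<phi> where "\<phi> \<in> S" "q = \<phi> a" by blast
  moreover have "orthogonal_transformation \<phi>" using orth_S(1)[OF S] \<open>\<phi> \<in> S\<close> .
  ultimately show ?thesis using a by (simp add: orthogonal_transformation_norm)
qed

lemma quad_scalar:
  fixes S :: "('a::euclidean_space \<Rightarrow> 'a) set"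
  assumes S: "orth_subgroup S" "spanning_property S" and dim: "DIM('a) \<ge> 2"
    and a: "a \<in> usphere"
  shows "(\<Sum>q\<in>(\<lambda>\<phi>. \<phi> a) ` S. (q \<bullet> v)^2) = real (card ((\<lambda>\<phi>. \<phi> a) ` S)) / real DIM('a) * (v \<bullet> v)"
proof -
  let ?O = "(\<lambda>\<phi>. \<phi> a) ` S"
  have fin: "finite ?O" using orbit_finite[OF S a] .
  define Q where "Q v = (\<Sum>q\<in>?O. (q \<bullet> v)^2)" for v
  have Qcont: "continuous_on usphere Q"
    unfolding Q_def by (intro continuous_intros)
  obtain e :: 'a where e: "e \<in> Basis" using nonempty_Basis by blast
  have "e \<in> usphere" using e by simp
  then have ne: "(usphere :: 'a set) \<noteq> {}" by blast
  obtain u0 where u0: "u0 \<in> usphere" "\<And>y. y \<in> usphere \<Longrightarrow> Q u0 \<le> Q y"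
    using continuous_attains_inf[OF compact_sphere ne Qcont] by blast
  define \<mu> where "\<mu> = Q u0"
  have Qscale: "Q (t *\<^sub>R v) = t^2 * Q v" for t v
    unfolding Q_def by (simp add: power_mult_distrib sum_distrib_left)
  have Bnn: "\<mu> * (v \<bullet> v) \<le> Q v" for v
  proof (cases "v = 0")
    case True then show ?thesis by (simp add: Q_def)
  next
    case False
    have vv: "v = norm v *\<^sub>R (v /\<^sub>R norm v)" using False by simp
    have "v /\<^sub>R norm v \<in> usphere" using False by simp
    then have "\<mu> \<le> Q (v /\<^sub>R norm v)" unfolding \<mu>_def by (rule u0(2))
    then have "(norm v)^2 * \<mu> \<le> (norm v)^2 * Q (v /\<^sub>R norm v)"
      by (rule mult_left_mono) simp
    also have "\<dots> = Q v" using Qscale[of "norm v" "v /\<^sub>R norm v"] vv by simp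
    finally show ?thesis by (simp add: power2_norm_eq_inner mult.commute)
  qed
  define B where "B v = Q v - \<mu> * (v \<bullet> v)" for v
  define bb where "bb v w = (\<Sum>q\<in>?O. (q \<bullet> v) * (q \<bullet> w)) - \<mu> * (v \<bullet> w)" for v w
  have Bnn': "0 \<le> B v" for v using Bnn[of v] unfolding B_def by simp
  have Bexp: "B (v + t *\<^sub>R w) = B v + 2 * t * bb v w + t^2 * B w" for v w t
  proof -
    have pt: "(q \<bullet> (v + t *\<^sub>R w))^2 = (q \<bullet> v)^2 + 2 * t * ((q \<bullet> v) * (q \<bullet> w)) + t^2 * (q \<bullet> w)^2" for q
      by (simp add: inner_add_right power2_eq_square algebra_simps)
    have "Q (v + t *\<^sub>R w) = Q v + 2 * t * (\<Sum>q\<in>?O. (q \<bullet> v) * (q \<bullet> w)) + t^2 * Q w"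
      unfolding Q_def pt by (simp add: sum.distrib sum_distrib_left)
    moreover have "(v + t *\<^sub>R w) \<bullet> (v + t *\<^sub>R w) = v \<bullet> v + 2 * t * (v \<bullet> w) + t^2 * (w \<bullet> w)"
      by (simp add: inner_add_left inner_add_right inner_commute[of w v] power2_eq_square algebra_simps)
    ultimately show ?thesis unfolding B_def bb_def by (simp add: algebra_simps)
  qed
  have ker: "bb v w = 0" if "B v = 0" for v w
  proof (rule quad_zero)
    show "0 \<le> 2 * t * bb v w + t^2 * B w" for t using Bnn'[of "v + t *\<^sub>R w"] Bexp[of v t w] that by simp
    show "0 \<le> B w" by (rule Bnn')
  qed
  have bbvv: "bb v v = B v" for v unfolding bb_def B_def Q_def by (simp add: power2_eq_square)
  define Z where "Z = {v. B v = 0}"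
  have Zeq: "Z = {v. \<forall>w. bb v w = 0}"
  proof (rule set_eqI)
    fix v
    show "v \<in> Z \<longleftrightarrow> v \<in> {v. \<forall>w. bb v w = 0}"
    proof
      assume "v \<in> Z"
      then have "B v = 0" by (simp add: Z_def)
      then show "v \<in> {v. \<forall>w. bb v w = 0}" using ker by blast
    next
      assume "v \<in> {v. \<forall>w. bb v w = 0}"
      then have "bb v v = 0" by blast
      then show "v \<in> Z" using bbvv[of v] by (simp add: Z_def)
    qed
  qed
  have bb_add: "bb (x + y) w = bb x w + bb y w" for x y w
    unfolding bb_def by (simp add: inner_add_right sum.distrib algebra_simps)
  have bb_scale: "bb (c *\<^sub>R x) w = c * bb x w" for c x w
    unfolding bb_def by (simp add: sum_distrib_left algebra_simps)
  have bb_zero: "bb 0 w = 0" for w unfolding bb_def by simp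
  have subZ: "subspace Z"
    unfolding Zeq subspace_def using bb_add bb_scale bb_zero by simp
  have Zinv: "\<psi> v \<in> Z" if "\<psi> \<in> S" "v \<in> Z" for \<psi> v
  proof -
    have ot: "orthogonal_transformation \<psi>" using orth_S(1)[OF S(1) that(1)] .
    have "Q (\<psi> v) = (\<Sum>q\<in>?O. (\<psi> q \<bullet> \<psi> v)^2)"
      unfolding Q_def using orbit_sum_invariant[OF S(1) fin that(1), of "\<lambda>q. (q \<bullet> \<psi> v)^2"] by simp
    also have "\<dots> = Q v" unfolding Q_def using orth_inner[OF ot] by simp
    finally have "B (\<psi> v) = B v" unfolding B_def using orth_inner[OF ot] by simp
    then show ?thesis using that(2) unfolding Z_def by simp
  qed
  have u0Z: "u0 \<in> Z" unfolding Z_def B_def \<mu>_def using u0(1) by (simp add: dot_square_norm)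
  have ZU: "Z = UNIV"
  proof (rule ccontr)
    assume "Z \<noteq> UNIV"
    have "dim Z \<noteq> DIM('a)"
    proof
      assume "dim Z = DIM('a)"
      then have "span Z = UNIV" by (simp add: dim_eq_full)
      moreover have "span Z = Z" using subZ by (simp only: span_eq_iff)
      ultimately show False using \<open>Z \<noteq> UNIV\<close> by simp
    qed
    then have "dim Z < DIM('a)" using dim_subset_UNIV[of Z] by linarith
    then show False using span_obstruction[OF S(2) subZ _ u0(1)] Zinv u0Z by blast
  qed
  have Qv: "Q v = \<mu> * (v \<bullet> v)" for v
  proof -
    have "v \<in> Z" using ZU by simp
    then show ?thesis unfolding Z_def B_def by simp
  qed
  have "(\<Sum>e\<in>Basis. Q e) = real (card ?O)"
  proof -
    have "(\<Sum>e\<in>Basis. Q e) = (\<Sum>q\<in>?O. \<Sum>e\<in>Basis. (q \<bullet> e) * (q \<bullet> e))"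
      unfolding Q_def power2_eq_square by (rule sum.swap)
    also have "\<dots> = (\<Sum>q\<in>?O. q \<bullet> q)" by (simp add: euclidean_inner[symmetric])
    also have "\<dots> = (\<Sum>q\<in>?O. 1)"
      using orbit_unit[OF S(1) a] by (intro sum.cong) (simp_all add: dot_square_norm)
    finally show ?thesis by simp
  qed
  moreover have "(\<Sum>e\<in>Basis. Q e) = \<mu> * real DIM('a)" using Qv by simp
  ultimately have "\<mu> = real (card ?O) / real DIM('a)" using dim by (simp add: field_simps)
  then show ?thesis using Qv[of v] unfolding Q_def by simp
qed


lemma key_orbit:
  fixes S :: "('a::euclidean_space \<Rightarrow> 'a) set"
  assumes S: "orth_subgroup S" "spanning_property S" and dim: "DIM('a) \<ge> 2"
    and a: "a \<in> usphere" and u: "u \<in> usphere"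
  shows "\<exists>\<phi>\<in>S. u \<bullet> \<phi> a \<ge> 1 / (2 * real DIM('a))"
proof (rule ccontr)
  let ?O = "(\<lambda>\<phi>. \<phi> a) ` S"
  let ?N = "real DIM('a)"
  assume "\<not> ?thesis"
  then have lt: "q \<bullet> u < 1 / (2 * ?N)" if "q \<in> ?O" for q
    using that by (auto simp: inner_commute)
  have fin: "finite ?O" using orbit_finite[OF S a] .
  have ne: "?O \<noteq> {}" using orth_S(2)[OF S(1)] by blast
  have Npos: "?N > 0" by simp
  have sum0: "(\<Sum>q\<in>?O. q \<bullet> u) = 0"
    using centroid_zero[OF S dim a] by (simp add: inner_sum_left[symmetric])
  have sq: "(\<Sum>q\<in>?O. (q \<bullet> u)^2) = real (card ?O) / ?N"
    using quad_scalar[OF S dim a, of u] u by (simp add: dot_square_norm)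
  have abs1: "\<bar>q \<bullet> u\<bar> \<le> 1" if "q \<in> ?O" for q
    using Cauchy_Schwarz_ineq2[of q u] orbit_unit[OF S(1) a that] u by simp
  have "(\<Sum>q\<in>?O. (q \<bullet> u)^2) \<le> (\<Sum>q\<in>?O. \<bar>q \<bullet> u\<bar>)"
  proof (rule sum_mono)
    fix q assume "q \<in> ?O"
    then have "\<bar>q \<bullet> u\<bar> * \<bar>q \<bullet> u\<bar> \<le> \<bar>q \<bullet> u\<bar> * 1"
      using abs1 by (intro mult_left_mono) auto
    then show "(q \<bullet> u)^2 \<le> \<bar>q \<bullet> u\<bar>" by (simp add: power2_eq_square)
  qed
  also have "\<dots> = (\<Sum>q\<in>?O. \<bar>q \<bullet> u\<bar> + q \<bullet> u)" using sum0 by (simp add: sum.distrib)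
  also have "\<dots> < (\<Sum>q\<in>?O. 1 / ?N)"
  proof (rule sum_strict_mono[OF fin ne])
    fix q assume q: "q \<in> ?O"
    show "\<bar>q \<bullet> u\<bar> + q \<bullet> u < 1 / ?N"
    proof (cases "q \<bullet> u \<ge> 0")
      case True
      then have "\<bar>q \<bullet> u\<bar> + q \<bullet> u = 2 * (q \<bullet> u)" by simp
      also have "\<dots> < 2 * (1 / (2 * ?N))" using lt[OF q] by simp
      finally show ?thesis by simp
    next
      case False
      then show ?thesis using Npos by simp
    qed
  qed
  also have "\<dots> = real (card ?O) / ?N" by simp
  finally show False using sq by simp
qed


lemma bdd_inner:
  fixes K :: "'a::euclidean_space set"
  assumes "\<And>y. y \<in> K \<Longrightarrow> norm y \<le> R"
  shows "bdd_above ((\<lambda>y. x \<bullet> y) ` K)"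
proof (rule bdd_aboveI2)
  fix y assume "y \<in> K"
  have "x \<bullet> y \<le> norm x * norm y" by (rule norm_cauchy_schwarz)
  also have "\<dots> \<le> norm x * R" using assms[OF \<open>y \<in> K\<close>] by (rule mult_left_mono) simp
  finally show "x \<bullet> y \<le> norm x * R" .
qed

lemma sf_upper:
  fixes K :: "'a::euclidean_space set"
  assumes "\<And>y. y \<in> K \<Longrightarrow> norm y \<le> R" "y \<in> K"
  shows "x \<bullet> y \<le> support_fun K x"
  unfolding support_fun_def by (rule cSUP_upper[OF assms(2) bdd_inner[OF assms(1)]])

lemma sf_least:
  fixes K :: "'a::euclidean_space set"
  assumes "K \<noteq> {}" "\<And>y. y \<in> K \<Longrightarrow> x \<bullet> y \<le> c"
  shows "support_fun K x \<le> c"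
  unfolding support_fun_def using assms by (rule cSUP_least)

lemma sf_zero:
  fixes K :: "'a::euclidean_space set"
  assumes "K \<noteq> {}"
  shows "support_fun K 0 = 0"
  unfolding support_fun_def using assms by simp

lemma sf_lip:
  fixes K :: "'a::euclidean_space set"
  assumes "K \<noteq> {}" "\<And>y. y \<in> K \<Longrightarrow> norm y \<le> R"
  shows "support_fun K u \<le> support_fun K x + R * norm (u - x)"
proof (rule sf_least[OF assms(1)])
  fix y assume y: "y \<in> K"
  have "u \<bullet> y = x \<bullet> y + (u - x) \<bullet> y" by (simp add: inner_diff_left)
  also have "(u - x) \<bullet> y \<le> norm (u - x) * norm y" by (rule norm_cauchy_schwarz)
  also have "\<dots> \<le> norm (u - x) * R" using assms(2)[OF y] by (rule mult_left_mono) simp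
  also have "x \<bullet> y \<le> support_fun K x" by (rule sf_upper[OF assms(2) y])
  finally show "u \<bullet> y \<le> support_fun K x + R * norm (u - x)" by (simp add: mult.commute)
qed

lemma sf_continuous:
  fixes K :: "'a::euclidean_space set"
  assumes "K \<noteq> {}" "\<And>y. y \<in> K \<Longrightarrow> norm y \<le> R" "0 \<le> R"
  shows "continuous_on UNIV (support_fun K)"
proof (rule lipschitz_on_continuous_on)
  show "R-lipschitz_on UNIV (support_fun K)"
  proof (rule lipschitz_onI)
    fix u x :: 'a
    have "support_fun K u \<le> support_fun K x + R * norm (u - x)" by (rule sf_lip[OF assms(1,2)])
    moreover have "support_fun K x \<le> support_fun K u + R * norm (x - u)" by (rule sf_lip[OF assms(1,2)])
    moreover have "norm (x - u) = norm (u - x)" by (rule norm_minus_commute)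
    ultimately show "dist (support_fun K u) (support_fun K x) \<le> R * dist u x"
      by (simp add: dist_real_def dist_norm abs_le_iff)
  qed (rule assms(3))
qed

lemma gamma_max_ge1:
  fixes S :: "('a::euclidean_space \<Rightarrow> 'a) set"
  assumes S: "orth_subgroup S" "spanning_property S" and dim: "DIM('a) \<ge> 2"
  shows "gamma_max S \<ge> 1"
proof -
  let ?N = "real DIM('a)"
  have Npos: "?N > 0" by simp
  obtain e :: 'a where e: "e \<in> Basis" using nonempty_Basis by blast
  have eu: "e \<in> usphere" using e by simp
  have ga: "1 \<le> gamma_a S a \<and> gamma_a S a \<le> 2 * ?N" if a: "a \<in> usphere" for a
  proof -
    let ?P = "orbit_polytope S a"
    let ?h = "support_fun ?P"
    have Psub: "?P \<subseteq> cball 0 1"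
      unfolding orbit_polytope_def by (rule hull_minimal) (use orbit_unit[OF S(1) a] in auto)
    have Pb: "norm y \<le> 1" if "y \<in> ?P" for y using Psub that by auto
    have Pne: "?P \<noteq> {}"
    proof -
      have "id a \<in> (\<lambda>\<phi>. \<phi> a) ` S" using orth_S(2)[OF S(1)] by (rule imageI)
      then have "a \<in> (\<lambda>\<phi>. \<phi> a) ` S" by simp
      then have "a \<in> convex hull ((\<lambda>\<phi>. \<phi> a) ` S)" by (rule hull_inc)
      then show ?thesis unfolding orbit_polytope_def by blast
    qed
    have hup: "?h x \<le> 1" if "x \<in> usphere" for x
    proof (rule sf_least[OF Pne])
      fix y assume "y \<in> ?P"
      have "x \<bullet> y \<le> norm x * norm y" by (rule norm_cauchy_schwarz)
      also have "\<dots> \<le> 1" using that Pb[OF \<open>y \<in> ?P\<close>] by simp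
      finally show "x \<bullet> y \<le> 1" .
    qed
    have hlow: "1 / (2 * ?N) \<le> ?h x" if xu: "x \<in> usphere" for x
    proof -
      obtain \<phi> where "\<phi> \<in> S" "x \<bullet> \<phi> a \<ge> 1 / (2 * ?N)" using key_orbit[OF S dim a xu] by blast
      moreover have "\<phi> a \<in> ?P" unfolding orbit_polytope_def
        using \<open>\<phi> \<in> S\<close> by (intro hull_inc) blast
      ultimately show ?thesis using sf_upper[where K="?P" and R=1 and y="\<phi> a" and x=x, OF Pb] by linarith
    qed
    have ne: "(usphere :: 'a set) \<noteq> {}" using eu by blast
    have bdda: "bdd_above (?h ` usphere)" using hup by (intro bdd_aboveI2) 
    have bddb: "bdd_below (?h ` usphere)" using hlow by (intro bdd_belowI2)
    have I1: "1 / (2 * ?N) \<le> (INF x\<in>usphere. ?h x)" using ne hlow by (rule cINF_greatest)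
    have S1: "(SUP x\<in>usphere. ?h x) \<le> 1" using ne hup by (rule cSUP_least)
    have IS: "(INF x\<in>usphere. ?h x) \<le> (SUP x\<in>usphere. ?h x)"
      using cINF_lower[OF bddb eu] cSUP_upper[OF eu bdda] by linarith
    have "1 / (2 * ?N) > 0" using Npos by simp
    then have Ipos: "(INF x\<in>usphere. ?h x) > 0" using I1 by linarith
    have "1 \<le> gamma_a S a" unfolding gamma_a_def using IS Ipos by simp
    moreover have "gamma_a S a \<le> 1 / (1 / (2 * ?N))"
      unfolding gamma_a_def
    proof -
      have "(SUP x\<in>usphere. ?h x) / (INF x\<in>usphere. ?h x) \<le> 1 / (INF x\<in>usphere. ?h x)"
        using S1 Ipos by (simp add: divide_right_mono)
      also have "\<dots> \<le> 1 / (1 / (2 * ?N))" using I1 Npos Ipos by (intro divide_left_mono) auto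
      finally show "(SUP x\<in>usphere. ?h x) / (INF x\<in>usphere. ?h x) \<le> 1 / (1 / (2 * ?N))" .
    qed
    ultimately show ?thesis by simp
  qed
  have "bdd_above (gamma_a S ` usphere)" using ga by (intro bdd_aboveI2) blast
  then have "gamma_a S e \<le> gamma_max S" unfolding gamma_max_def by (rule cSUP_upper[OF eu])
  then show ?thesis using ga[OF eu] by linarith
qed


lemma K0_facts:
  assumes "\<Omega> \<in> K0 S"
  shows "compact \<Omega>" "interior \<Omega> \<noteq> {}" "0 \<in> \<Omega>" "\<And>\<phi>. \<phi> \<in> S \<Longrightarrow> \<phi> ` \<Omega> = \<Omega>"
  using assms unfolding K0_def by blast+

lemma omega_bound:
  fixes S :: "('a::euclidean_space \<Rightarrow> 'a) set"
  assumes S: "orth_subgroup S" "spanning_property S" and dim: "DIM('a) \<ge> 2"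
    and Om: "\<Omega> \<in> K0 S" and x: "x \<in> usphere" and y: "y \<in> \<Omega>"
  shows "norm y \<le> 2 * real DIM('a) * support_fun \<Omega> x"
proof -
  let ?N = "real DIM('a)"
  have "bounded \<Omega>" using K0_facts(1)[OF Om] by (rule compact_imp_bounded)
  then obtain R where R: "\<And>z. z \<in> \<Omega> \<Longrightarrow> norm z \<le> R" unfolding bounded_iff by blast
  have h0: "0 \<le> support_fun \<Omega> x" using sf_upper[OF R K0_facts(3)[OF Om], of x] by simp
  show ?thesis
  proof (cases "y = 0")
    case True then show ?thesis using h0 by simp
  next
    case False
    define u where "u = y /\<^sub>R norm y"
    have uu: "u \<in> usphere" using False unfolding u_def by simp
    obtain \<phi> where \<phi>: "\<phi> \<in> S" "u \<bullet> \<phi> x \<ge> 1 / (2 * ?N)" using key_orbit[OF S dim x uu] by blast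
    have "y \<in> \<phi> ` \<Omega>" using K0_facts(4)[OF Om \<phi>(1)] y by simp
    then obtain z where z: "z \<in> \<Omega>" "y = \<phi> z" by blast
    have ot: "orthogonal_transformation \<phi>" using orth_S(1)[OF S(1) \<phi>(1)] .
    have "y \<bullet> \<phi> x = z \<bullet> x" using z(2) orth_inner[OF ot] by simp
    also have "\<dots> \<le> support_fun \<Omega> x" using sf_upper[OF R z(1), of x] by (simp add: inner_commute)
    finally have yx: "y \<bullet> \<phi> x \<le> support_fun \<Omega> x" .
    have "y \<bullet> \<phi> x = norm y * (u \<bullet> \<phi> x)" unfolding u_def using False by simp
    then have "norm y * (1 / (2 * ?N)) \<le> support_fun \<Omega> x"
      using yx mult_left_mono[OF \<phi>(2), of "norm y"] by simp
    then show ?thesis by (simp add: field_simps)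
  qed
qed

lemma omega_nonzero:
  assumes "\<Omega> \<in> K0 (S :: ('a::euclidean_space \<Rightarrow> 'a) set)"
  shows "\<exists>y\<in>\<Omega>. y \<noteq> 0"
proof -
  obtain z where "z \<in> interior \<Omega>" using K0_facts(2)[OF assms] by blast
  then obtain e where e: "e > 0" "ball z e \<subseteq> \<Omega>" unfolding mem_interior by blast
  obtain b :: 'a where b: "b \<in> Basis" using nonempty_Basis by blast
  show ?thesis
  proof (cases "z = 0")
    case False
    then show ?thesis using e by (intro bexI[of _ z]) auto
  next
    case True
    have "(e/2) *\<^sub>R b \<in> ball z e" using True e b by (simp add: dist_norm)
    moreover have "(e/2) *\<^sub>R b \<noteq> 0" using e b by auto
    ultimately show ?thesis using e(2) by blast
  qed
qed

lemma normalize_close: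
  fixes x x0 :: "'a::euclidean_space"
  assumes x0: "norm x0 = 1" and s: "s \<ge> 1/2" and xr: "norm (x - s *\<^sub>R x0) < r" and r: "r \<le> 1/4"
  shows "x \<noteq> 0" "norm (x /\<^sub>R norm x - x0) \<le> 4 * r"
proof -
  have ns: "norm (s *\<^sub>R x0) = s" using x0 s by simp
  have d: "\<bar>norm x - s\<bar> \<le> norm (x - s *\<^sub>R x0)"
    using norm_triangle_ineq3[of x "s *\<^sub>R x0"] ns by simp
  then have nx: "norm x > 1/4" using xr r s by linarith
  then show "x \<noteq> 0" by auto
  have spos: "s > 0" using s by simp
  have e1: "x /\<^sub>R norm x - x /\<^sub>R s = (inverse (norm x) - inverse s) *\<^sub>R x"
    by (simp add: scaleR_diff_left)
  have e2: "inverse (norm x) - inverse s = (s - norm x) / (s * norm x)"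
  proof -
    have "norm x \<noteq> 0" "s \<noteq> 0" using nx spos by auto
    then show ?thesis by (simp add: field_simps)
  qed
  have "norm (x /\<^sub>R norm x - x /\<^sub>R s) = \<bar>(s - norm x) / (s * norm x)\<bar> * norm x"
    unfolding e1 e2 by simp
  also have "\<dots> = \<bar>s - norm x\<bar> / s"
  proof -
    have "norm x > 0" using nx by linarith
    then show ?thesis using spos by (simp add: abs_divide abs_mult)
  qed
  also have "\<dots> \<le> norm (x - s *\<^sub>R x0) / s" using d spos by (intro divide_right_mono) auto
  finally have t1: "norm (x /\<^sub>R norm x - x /\<^sub>R s) \<le> norm (x - s *\<^sub>R x0) / s" .
  have "x /\<^sub>R s - x0 = (1 / s) *\<^sub>R (x - s *\<^sub>R x0)" using spos by (simp add: algebra_simps inverse_eq_divide)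
  then have t2: "norm (x /\<^sub>R s - x0) = norm (x - s *\<^sub>R x0) / s" using spos by simp
  have "norm (x /\<^sub>R norm x - x0) \<le> norm (x /\<^sub>R norm x - x /\<^sub>R s) + norm (x /\<^sub>R s - x0)"
    using norm_triangle_ineq[of "x /\<^sub>R norm x - x /\<^sub>R s" "x /\<^sub>R s - x0"] by simp
  also have "\<dots> \<le> 2 * norm (x - s *\<^sub>R x0) / s" using t1 t2 by simp
  also have "\<dots> \<le> 2 * norm (x - s *\<^sub>R x0) / (1/2)" using s spos by (intro divide_left_mono) auto
  also have "\<dots> \<le> 4 * r" using xr by simp
  finally show "norm (x /\<^sub>R norm x - x0) \<le> 4 * r" .
qed

lemma ball_integrable:
  "integrable lebesgue (indicator (ball (c::'a::euclidean_space) r) :: 'a \<Rightarrow> real)"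
proof (rule integrable_real_indicator)
  show "ball c r \<in> sets lebesgue" using lmeasurable_ball[of c r] by (rule fmeasurableD)
  show "emeasure lebesgue (ball c r) < \<infinity>" using fmeasurableD2[OF lmeasurable_ball[of c r]]
    by (simp add: less_top)
qed

lemma ball_measure:
  assumes "r \<ge> 0"
  shows "measure lebesgue (ball (c::'a::euclidean_space) r) = r ^ DIM('a) * measure lborel (ball (0::'a) 1)"
proof -
  have "measure lebesgue (ball c r) = measure lborel (ball c r)"
    by (rule measure_completion) simp
  then show ?thesis using content_ball_conv_unit_ball[OF assms, of c] by simp
qed

lemma G_measurable:
  fixes f :: "'a::euclidean_space \<Rightarrow> real" and g :: "'a \<Rightarrow> real"
  assumes "f \<in> borel_measurable borel" "h \<in> borel_measurable borel"
  shows "(\<lambda>x. indicator (ball (0::'a) 1) x * (f (x /\<^sub>R norm x) * h (x /\<^sub>R norm x) powr p)) \<in> borel_measurable lebesgue"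
proof -
  have n: "(\<lambda>x::'a. x /\<^sub>R norm x) \<in> borel_measurable borel" by measurable
  have fn: "(\<lambda>x::'a. f (x /\<^sub>R norm x)) \<in> borel_measurable borel"
    using measurable_compose[OF n assms(1)] by (simp add: comp_def)
  have hn: "(\<lambda>x::'a. h (x /\<^sub>R norm x)) \<in> borel_measurable borel"
    using measurable_compose[OF n assms(2)] by (simp add: comp_def)
  have i: "(indicator (ball (0::'a) 1) :: 'a \<Rightarrow> real) \<in> borel_measurable borel"
    by (rule borel_measurable_indicator) simp
  have "(\<lambda>x. indicator (ball (0::'a) 1) x * (f (x /\<^sub>R norm x) * h (x /\<^sub>R norm x) powr p)) \<in> borel_measurable borel"
    using i fn hn by measurable
  then have "(\<lambda>x. indicator (ball (0::'a) 1) x * (f (x /\<^sub>R norm x) * h (x /\<^sub>R norm x) powr p)) \<in> borel_measurable lborel"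
    by simp
  then show ?thesis by (rule measurable_completion)
qed

lemma integral_lower_bound:
  fixes f h :: "'a::euclidean_space \<Rightarrow> real" and x0 :: 'a
  assumes dim: "DIM('a) \<ge> 2"
    and fm: "f \<in> borel_measurable borel" and hm: "h \<in> borel_measurable borel"
    and x0: "x0 \<in> usphere" and h0: "h 0 = 0"
    and c1: "0 < c1" and fb: "\<forall>u\<in>usphere. c1 \<le> f u \<and> f u \<le> c2"
    and l: "0 < l" and hl: "\<forall>u\<in>usphere. l \<le> h u"
    and P: "1 \<le> P" and p: "p \<le> 0" and H: "0 < H"
    and hcap: "\<forall>u\<in>usphere. norm (u - x0) \<le> 1 / (2 * real DIM('a) * P) \<longrightarrow> h u \<le> H"
    and eq: "(\<integral>x. indicator (ball 0 1) x * (f (x /\<^sub>R norm x) * h (x /\<^sub>R norm x) powr p) \<partial>lebesgue)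
           = (\<integral>x. indicator (ball 0 1) x * f (x /\<^sub>R norm x) \<partial>lebesgue)"
  shows "(INF y\<in>usphere. f y) * H powr p \<le> 16 * (8 * real DIM('a) * P) ^ (DIM('a) - 1) * (SUP y\<in>usphere. f y)"
proof -
  let ?N = "real DIM('a)"
  let ?mf = "INF y\<in>usphere. f y"
  let ?Mf = "SUP y\<in>usphere. f y"
  define G where "G x = indicator (ball (0::'a) 1) x * (f (x /\<^sub>R norm x) * h (x /\<^sub>R norm x) powr p)" for x
  define F where "F x = indicator (ball (0::'a) 1) x * f (x /\<^sub>R norm x)" for x
  have x0n: "norm x0 = 1" using x0 by simp
  have ne: "(usphere :: 'a set) \<noteq> {}" using x0 by blast
  have bda: "bdd_above (f ` usphere)" using fb by (intro bdd_aboveI2) blast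
  have bdb: "bdd_below (f ` usphere)" using fb by (intro bdd_belowI2) blast
  have fle: "f u \<le> ?Mf" if "u \<in> usphere" for u using cSUP_upper[OF that bda] .
  have fge: "?mf \<le> f u" if "u \<in> usphere" for u using cINF_lower[OF bdb that] .
  have mfc1: "c1 \<le> ?mf" using ne by (rule cINF_greatest) (use fb in blast)
  have mfpos: "0 < ?mf" using mfc1 c1 by linarith
  have Mfpos: "0 < ?Mf" using fge[OF x0] fle[OF x0] mfpos by linarith
  have unit: "x /\<^sub>R norm x \<in> usphere" if "x \<noteq> 0" for x :: 'a using that by simp
  have Gnn: "0 \<le> G x" for x
  proof (cases "x = 0")
    case True then show ?thesis by (simp add: G_def h0)
  next
    case False
    have "c1 \<le> f (x /\<^sub>R norm x)" using fb unit[OF False] by blast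
    then have "0 \<le> f (x /\<^sub>R norm x)" using c1 by linarith
    then show ?thesis unfolding G_def by (simp add: indicator_def)
  qed
  have Gbd: "G x \<le> (c2 * l powr p) * indicator (ball (0::'a) 1) x" for x
  proof (cases "x = 0 \<or> x \<notin> ball 0 1")
    case True then show ?thesis
    proof
      assume "x = 0"
      have "c1 \<le> c2" using fb x0 by force
      then have "0 \<le> c2 * l powr p" using c1 by simp
      then show ?thesis using \<open>x = 0\<close> by (simp add: G_def h0 indicator_def)
    next
      assume "x \<notin> ball 0 1" then show ?thesis by (simp add: G_def)
    qed
  next
    case False
    then have x: "x \<noteq> 0" "x \<in> ball 0 1" by auto
    let ?u = "x /\<^sub>R norm x"
    have u: "?u \<in> usphere" using unit[OF x(1)] .
    have f0: "c1 \<le> f ?u" "f ?u \<le> c2" using fb u by blast+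
    then have f1: "0 \<le> f ?u" "f ?u \<le> c2" using c1 by linarith+
    have "h ?u powr p \<le> l powr p" using powr_mono2'[OF p l] hl u by blast
    then have "f ?u * h ?u powr p \<le> c2 * l powr p"
      using f1 by (intro mult_mono) auto
    then show ?thesis using x(2) by (simp add: G_def)
  qed
  have Gmeas: "G \<in> borel_measurable lebesgue"
    unfolding G_def using G_measurable[OF fm hm] .
  have Dint: "integrable lebesgue (\<lambda>x. (c2 * l powr p) * indicator (ball (0::'a) 1) x)"
    using ball_integrable by (rule integrable_mult_right)
  have Gint: "integrable lebesgue G"
  proof (rule Bochner_Integration.integrable_bound[OF Dint Gmeas])
    show "AE x in lebesgue. norm (G x) \<le> norm (c2 * l powr p * indicator (ball 0 1) x)"
    proof (rule AE_I2)
      fix x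
      have "0 \<le> c2 * l powr p * indicator (ball (0::'a) 1) x"
        using Gnn[of x] Gbd[of x] by linarith
      then show "norm (G x) \<le> norm (c2 * l powr p * indicator (ball (0::'a) 1) x)"
        using Gnn[of x] Gbd[of x] by simp
    qed
  qed
  have Fup: "(\<integral>x. F x \<partial>lebesgue) \<le> (\<integral>x. ?Mf * indicator (ball (0::'a) 1) x \<partial>lebesgue)"
  proof (rule integral_mono_AE')
    show "integrable lebesgue (\<lambda>x. ?Mf * indicator (ball (0::'a) 1) x)"
      using ball_integrable by (rule integrable_mult_right)
    have "AE x in lebesgue. x \<noteq> (0::'a)" by (rule AE_completion[OF AE_lborel_singleton])
    then show "AE x in lebesgue. F x \<le> ?Mf * indicator (ball (0::'a) 1) x"
    proof (rule AE_mp[OF _ AE_I2], intro impI)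
      fix x :: 'a assume "x \<noteq> 0"
      then show "F x \<le> ?Mf * indicator (ball (0::'a) 1) x"
        using fle[OF unit] by (simp add: F_def indicator_def)
    qed
    show "AE x in lebesgue. 0 \<le> ?Mf * indicator (ball (0::'a) 1) x"
      using Mfpos by (intro AE_I2) simp
  qed
  define V where "V = measure lborel (ball (0::'a) 1)"
  have Vpos: "V > 0" unfolding V_def by (rule content_ball_pos) simp
  have FV: "(\<integral>x. F x \<partial>lebesgue) \<le> ?Mf * V"
    using Fup ball_measure[of 1 "0::'a"] by (simp add: V_def)
  define r where "r = 1 / (8 * ?N * P)"
  define K where "K = nat \<lfloor>?N * P\<rfloor>"
  define s where "s k = 1/2 + 2 * r * real k" for k :: nat
  define B where "B k = ball (s k *\<^sub>R x0) r" for k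
  have N2: "?N \<ge> 2" using dim by simp
  then have "?N * P \<ge> 2 * 1" using P by (intro mult_mono) auto
  then have NP: "?N * P \<ge> 2" by simp
  have NPp: "0 < ?N * P" using NP by linarith
  then have NPp': "0 < P * ?N" by (simp add: mult.commute)
  have Pp: "0 < P" using P by simp
  have rpos: "r > 0" using NP NPp NPp' unfolding r_def by simp
  have r16: "r \<le> 1/16" using NP NPp NPp' unfolding r_def by (simp add: field_simps)
  have Kr: "real K = of_int \<lfloor>?N * P\<rfloor>" unfolding K_def using NP by simp
  have Kle: "real K \<le> ?N * P" using Kr by simp
  have Kge: "real K \<ge> ?N * P / 2" using Kr real_of_int_floor_add_one_gt[of "?N * P"] NP by linarith
  have rK: "2 * r * real K \<le> 1/4" using Kle rpos NP NPp NPp' unfolding r_def by (simp add: field_simps)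
  have sge: "s k \<ge> 1/2" for k using rpos unfolding s_def by simp
  have inB: "x \<noteq> 0 \<and> x \<in> ball 0 1 \<and> norm (x /\<^sub>R norm x - x0) \<le> 1 / (2 * ?N * P)"
    if k: "k < K" and x: "x \<in> B k" for k x
  proof -
    have xr: "norm (x - s k *\<^sub>R x0) < r" using x unfolding B_def by (simp add: dist_norm norm_minus_commute)
    have r4: "r \<le> 1/4" using r16 by simp
    have nc: "x \<noteq> 0" "norm (x /\<^sub>R norm x - x0) \<le> 4 * r"
      using normalize_close[OF x0n sge xr r4] by blast+
    have "4 * r = 1 / (2 * ?N * P)" unfolding r_def by simp
    moreover have "norm x < 1"
    proof -
      have "norm x \<le> norm (s k *\<^sub>R x0) + norm (x - s k *\<^sub>R x0)"
        using norm_triangle_ineq[of "s k *\<^sub>R x0" "x - s k *\<^sub>R x0"] by simp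
      also have "norm (s k *\<^sub>R x0) = s k" using x0n sge[of k] by simp
      finally have "norm x < s k + r" using xr by linarith
      moreover have "real k + 1 \<le> real K" using k by linarith
      then have "2 * r * (real k + 1) \<le> 2 * r * real K" using rpos
        by (intro mult_left_mono) auto
      then have "2 * r * real k + 2 * r \<le> 2 * r * real K" by (simp add: algebra_simps)
      ultimately show ?thesis using rK rpos unfolding s_def by linarith
    qed
    ultimately show ?thesis using nc by simp
  qed
  have disj: "disjoint_family_on B {..<K}"
    unfolding disjoint_family_on_def
  proof (intro ballI impI)
    fix i j assume ij: "i \<in> {..<K}" "j \<in> {..<K}" "i \<noteq> j"
    show "B i \<inter> B j = {}"
    proof (rule ccontr)
      assume "B i \<inter> B j \<noteq> {}"
      then obtain x where "x \<in> B i" "x \<in> B j" by blast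
      then have "dist (s i *\<^sub>R x0) x < r" "dist (s j *\<^sub>R x0) x < r" unfolding B_def by auto
      then have d: "dist (s i *\<^sub>R x0) (s j *\<^sub>R x0) < 2 * r"
        using dist_triangle3[of "s i *\<^sub>R x0" "s j *\<^sub>R x0" x] dist_commute[of x "s i *\<^sub>R x0"]
          dist_commute[of x "s j *\<^sub>R x0"] by linarith
      have "dist (s i *\<^sub>R x0) (s j *\<^sub>R x0) = norm ((s i - s j) *\<^sub>R x0)"
        by (simp add: dist_norm scaleR_diff_left)
      also have "\<dots> = \<bar>s i - s j\<bar>" using x0n by simp
      also have "\<dots> = 2 * r * \<bar>real i - real j\<bar>" unfolding s_def using rpos
        by (simp add: abs_mult right_diff_distrib[symmetric])
      finally have e: "dist (s i *\<^sub>R x0) (s j *\<^sub>R x0) = 2 * r * \<bar>real i - real j\<bar>" .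
      have "\<bar>real i - real j\<bar> \<ge> 1" using ij(3) by linarith
      then have "2 * r * \<bar>real i - real j\<bar> \<ge> 2 * r * 1" using rpos by (intro mult_left_mono) auto
      then show False using d e by linarith
    qed
  qed
  define c where "c = ?mf * H powr p"
  have cnn: "0 \<le> c" unfolding c_def using mfpos by simp
  have lowpt: "(\<Sum>k\<in>{..<K}. c * indicator (B k) x) \<le> G x" for x
  proof (cases "\<exists>k\<in>{..<K}. x \<in> B k")
    case True
    then obtain k where k: "k \<in> {..<K}" "x \<in> B k" by blast
    have "(\<Sum>k\<in>{..<K}. c * indicator (B k) x) = c"
      using sum_indicator_disjoint_family[OF disj k(2) _ k(1), of "\<lambda>_. c"] by simp
    moreover have "c \<le> G x"
    proof -
      have xi: "x \<noteq> 0" "x \<in> ball 0 1" "norm (x /\<^sub>R norm x - x0) \<le> 1 / (2 * ?N * P)"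
        using inB[of k x] k by auto
      let ?u = "x /\<^sub>R norm x"
      have u: "?u \<in> usphere" using unit[OF xi(1)] .
      have hu: "h ?u \<le> H" using hcap u xi(3) by blast
      have "l \<le> h ?u" using hl u by blast
      then have hpos: "0 < h ?u" using l by linarith
      have "H powr p \<le> h ?u powr p" using powr_mono2'[OF p hpos hu] .
      then have "?mf * H powr p \<le> f ?u * h ?u powr p"
        using fge[OF u] mfpos by (intro mult_mono) auto
      then show ?thesis using xi(2) unfolding G_def c_def by simp
    qed
    ultimately show ?thesis by linarith
  next
    case False
    then have "(\<Sum>k\<in>{..<K}. c * indicator (B k) x) = 0" by (intro sum.neutral) auto
    then show ?thesis using Gnn[of x] by linarith
  qed
  have low: "(\<integral>x. (\<Sum>k\<in>{..<K}. c * indicator (B k) x) \<partial>lebesgue) \<le> (\<integral>x. G x \<partial>lebesgue)"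
    by (rule integral_mono_AE'[OF Gint]) (use lowpt Gnn in auto)
  have lowval: "(\<integral>x. (\<Sum>k\<in>{..<K}. c * indicator (B k) x) \<partial>lebesgue) = real K * (c * (r ^ DIM('a) * V))"
  proof -
    have "(\<integral>x. (\<Sum>k\<in>{..<K}. c * indicator (B k) x) \<partial>lebesgue) = (\<Sum>k\<in>{..<K}. (\<integral>x. c * indicator (B k) x \<partial>lebesgue))"
    proof (rule Bochner_Integration.integral_sum)
      fix k
      show "integrable lebesgue (\<lambda>x. c * indicator (B k) x)"
        unfolding B_def by (rule integrable_mult_right[OF ball_integrable])
    qed
    also have "\<dots> = (\<Sum>k\<in>{..<K}. c * (r ^ DIM('a) * V))"
    proof (rule sum.cong[OF refl])
      fix k
      have "measure lebesgue (B k) = r ^ DIM('a) * V"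
        unfolding B_def V_def using rpos by (intro ball_measure) simp
      then show "(\<integral>x. c * indicator (B k) x \<partial>lebesgue) = c * (r ^ DIM('a) * V)" by simp
    qed
    finally show ?thesis by simp
  qed
  have GF: "(\<integral>x. G x \<partial>lebesgue) = (\<integral>x. F x \<partial>lebesgue)" using eq unfolding G_def F_def .
  have "real K * (c * (r ^ DIM('a) * V)) \<le> ?Mf * V" using low lowval GF FV by linarith
  then have main: "real K * c * r ^ DIM('a) \<le> ?Mf" using Vpos by (simp add: field_simps)
  obtain n where n: "DIM('a) = Suc n" using dim by (cases "DIM('a)") auto
  have "real K * r \<ge> 1/16" using Kge rpos NP NPp NPp' unfolding r_def by (simp add: field_simps)
  then have "c * r ^ n * (1/16) \<le> c * r ^ n * (real K * r)" using cnn rpos by (intro mult_left_mono) auto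
  also have "\<dots> = real K * c * r ^ DIM('a)" by (simp add: n)
  finally have "c * r ^ n \<le> 16 * ?Mf" using main by linarith
  then have "c \<le> 16 * ?Mf / r ^ n" using rpos by (simp add: field_simps)
  also have "\<dots> = 16 * (8 * ?N * P) ^ (DIM('a) - 1) * ?Mf" unfolding r_def n by (simp add: power_divide)
  finally show ?thesis unfolding c_def .
qed


theorem lemma3p3:
  assumes "DIM('a::euclidean_space) \<ge> 2"
  shows "\<exists>C>0. \<forall>(p::real) (S::('a \<Rightarrow> 'a) set) (f::'a \<Rightarrow> real) c1 c2 \<Omega>.
     p < - real (DIM('a) - 1) \<longrightarrow>
     orth_subgroup S \<longrightarrow> discrete_maps S \<longrightarrow> spanning_property S \<longrightarrow>
     f \<in> borel_measurable borel \<longrightarrow>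
     (\<forall>\<phi>\<in>S. \<forall>x\<in>usphere. f (\<phi> x) = f x) \<longrightarrow>
     0 < c1 \<longrightarrow> (\<forall>x\<in>usphere. c1 \<le> f x \<and> f x \<le> c2) \<longrightarrow>
     \<Omega> \<in> Kp p f S \<longrightarrow>
     (\<forall>x\<in>usphere. support_fun \<Omega> x \<ge>
        ((-p) ^ (DIM('a) - 1) * C * gamma_max S *
          ((SUP y\<in>usphere. f y) / (INF y\<in>usphere. f y)))
        powr (1 / (real (DIM('a) - 1) + p)))"
proof -
  let ?N = "real DIM('a)"
  define n where "n = DIM('a) - 1"
  have Nn: "?N = real n + 1" using assms unfolding n_def by (simp add: of_nat_diff)
  have n1: "n \<ge> 1" using assms unfolding n_def by simp
  define C where "C = 16 * exp 1 * (8 * ?N) ^ n"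
  have e1: "1 \<le> exp (1::real)" by simp
  have N8: "1 \<le> 8 * ?N" using assms by simp
  then have "1 \<le> (8 * ?N) ^ n" by (rule one_le_power)
  then have "1 * 1 \<le> exp 1 * (8 * ?N) ^ n" using e1 by (intro mult_mono) auto
  then have C1: "1 \<le> C" unfolding C_def by simp
  show ?thesis
  proof (rule exI[of _ C], intro conjI allI impI ballI)
    show "C > 0" using C1 by simp
    fix p :: real and S :: "('a \<Rightarrow> 'a) set" and f :: "'a \<Rightarrow> real" and c1 c2 :: real
      and \<Omega> :: "'a set" and x0 :: 'a
    assume hp: "p < - real (DIM('a) - 1)" and S1: "orth_subgroup S" and disc: "discrete_maps S"
      and S2: "spanning_property S" and fm: "f \<in> borel_measurable borel"
      and finv: "\<forall>\<phi>\<in>S. \<forall>x\<in>usphere. f (\<phi> x) = f x" and c1: "0 < c1"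
      and fb: "\<forall>x\<in>usphere. c1 \<le> f x \<and> f x \<le> c2" and Om: "\<Omega> \<in> Kp p f S" and x0: "x0 \<in> usphere"
    have OmK: "\<Omega> \<in> K0 S" and Kint: "sphere_integral (\<lambda>x. f x * support_fun \<Omega> x powr p) = sphere_integral f"
      using Om unfolding Kp_def by blast+
    define P where "P = - p"
    have Pn: "P > real n" using hp unfolding P_def n_def by simp
    have P1: "1 \<le> P" using Pn n1 by simp
    have pn: "p \<le> 0" using P1 unfolding P_def by simp
    obtain y0 where y0: "y0 \<in> \<Omega>" "y0 \<noteq> 0" using omega_nonzero[OF OmK] by blast
    have One: "\<Omega> \<noteq> {}" using y0 by blast
    have Npos: "?N > 0" by simp
    define l where "l = norm y0 / (2 * ?N)"
    have lpos: "0 < l" unfolding l_def using y0 Npos by simp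
    have hl: "\<forall>u\<in>usphere. l \<le> support_fun \<Omega> u"
    proof
      fix u :: 'a assume u: "u \<in> usphere"
      have "norm y0 \<le> 2 * ?N * support_fun \<Omega> u" by (rule omega_bound[OF S1 S2 assms OmK u y0(1)])
      then show "l \<le> support_fun \<Omega> u" unfolding l_def using Npos by (simp add: field_simps)
    qed
    define m where "m = support_fun \<Omega> x0"
    have mpos: "0 < m" using hl x0 lpos unfolding m_def by force
    have Rb: "\<And>y. y \<in> \<Omega> \<Longrightarrow> norm y \<le> 2 * ?N * m"
      unfolding m_def by (rule omega_bound[OF S1 S2 assms OmK x0])
    have h0: "support_fun \<Omega> 0 = 0" by (rule sf_zero[OF One])
    have hcont: "continuous_on UNIV (support_fun \<Omega>)"
    proof (rule sf_continuous[OF One])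
      show "\<And>y. y \<in> \<Omega> \<Longrightarrow> norm y \<le> 2 * ?N * m" by (rule Rb)
      show "0 \<le> 2 * ?N * m" using mpos by simp
    qed
    have hm: "support_fun \<Omega> \<in> borel_measurable borel"
      using hcont by (rule borel_measurable_continuous_onI)
    define H where "H = m * (1 + 1 / P)"
    have iP: "0 < 1 / P" using P1 by simp
    then have oP: "0 < 1 + 1 / P" by linarith
    have Hpos: "0 < H" unfolding H_def using mpos oP by (rule mult_pos_pos)
    have hcap: "\<forall>u\<in>usphere. norm (u - x0) \<le> 1 / (2 * ?N * P) \<longrightarrow> support_fun \<Omega> u \<le> H"
    proof (intro ballI impI)
      fix u :: 'a assume u: "u \<in> usphere" and d: "norm (u - x0) \<le> 1 / (2 * ?N * P)"
      have "support_fun \<Omega> u \<le> m + 2 * ?N * m * norm (u - x0)"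
        unfolding m_def by (rule sf_lip[OF One Rb[unfolded m_def]])
      also have "2 * ?N * m * norm (u - x0) \<le> 2 * ?N * m * (1 / (2 * ?N * P))"
        using d mpos by (intro mult_left_mono) auto
      also have "2 * ?N * m * (1 / (2 * ?N * P)) = m / P" using Npos P1 by (simp add: field_simps)
      finally show "support_fun \<Omega> u \<le> H" unfolding H_def by (simp add: field_simps)
    qed
    have eq: "(\<integral>x. indicator (ball 0 1) x * (f (x /\<^sub>R norm x) * support_fun \<Omega> (x /\<^sub>R norm x) powr p) \<partial>lebesgue)
           = (\<integral>x. indicator (ball 0 1) x * f (x /\<^sub>R norm x) \<partial>lebesgue)"
      using Kint unfolding sphere_integral_def by simp
    have ILB: "(INF y\<in>usphere. f y) * H powr p \<le> 16 * (8 * ?N * P) ^ (DIM('a) - 1) * (SUP y\<in>usphere. f y)"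
      by (rule integral_lower_bound[OF assms fm hm x0 h0 c1 fb lpos hl P1 pn Hpos hcap eq])
    let ?mf = "INF y\<in>usphere. f y"
    let ?Mf = "SUP y\<in>usphere. f y"
    have bda: "bdd_above (f ` usphere)" using fb by (intro bdd_aboveI2) blast
    have bdb: "bdd_below (f ` usphere)" using fb by (intro bdd_belowI2) blast
    have ne: "(usphere :: 'a set) \<noteq> {}" using x0 by blast
    have mfc1: "c1 \<le> ?mf" using ne by (rule cINF_greatest) (use fb in blast)
    have mfpos: "0 < ?mf" using mfc1 c1 by linarith
    have mfMf: "?mf \<le> ?Mf" using cINF_lower[OF bdb x0] cSUP_upper[OF x0 bda] by linarith
    define M where "M = ?Mf / ?mf"
    have M1: "1 \<le> M" unfolding M_def using mfMf mfpos by simp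
    have Hp: "H powr p = m powr p * (1 + 1 / P) powr p"
      unfolding H_def by (rule powr_mult)
    have lnb: "ln (1 + 1 / P) \<le> 1 / P" using P1 by (intro ln_add_one_self_le_self) simp
    have "p * (1 / P) \<le> p * ln (1 + 1 / P)" using lnb pn by (rule mult_left_mono_neg)
    moreover have "p * (1 / P) = -1" unfolding P_def using P1 P_def by (simp add: field_simps)
    ultimately have "exp (-1) \<le> exp (p * ln (1 + 1 / P))" by simp
    moreover have "(1 + 1 / P) powr p = exp (p * ln (1 + 1 / P))"
    proof -
      have "1 + 1 / P \<noteq> 0" using oP by linarith
      then show ?thesis by (simp add: powr_def)
    qed
    ultimately have ebound: "exp (-1) \<le> (1 + 1 / P) powr p" by simp
    have "?mf * (m powr p * exp (-1)) \<le> ?mf * (m powr p * (1 + 1 / P) powr p)"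
      using ebound mfpos by (intro mult_left_mono) auto
    also have "\<dots> \<le> 16 * (8 * ?N * P) ^ n * ?Mf" using ILB Hp unfolding n_def by simp
    finally have "m powr p \<le> 16 * (8 * ?N * P) ^ n * ?Mf / (?mf * exp (-1))"
      using mfpos by (simp add: field_simps)
    also have "\<dots> = C * P ^ n * M"
      unfolding C_def M_def using mfpos by (simp add: power_mult_distrib exp_minus field_simps)
    finally have mp: "m powr p \<le> C * P ^ n * M" .
    have gam: "1 \<le> gamma_max S" by (rule gamma_max_ge1[OF S1 S2 assms])
    define X where "X = P ^ n * C * gamma_max S * M"
    have Pn1: "1 \<le> P ^ n" using P1 by (rule one_le_power)
    have CPM: "1 \<le> P ^ n * C * M"
    proof -
      have "1 * 1 \<le> P ^ n * C" using Pn1 C1 by (intro mult_mono) auto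
      then have "1 * 1 \<le> P ^ n * C * M" using M1 by (intro mult_mono) auto
      then show ?thesis by simp
    qed
    have "P ^ n * C * M * 1 \<le> P ^ n * C * M * gamma_max S" using gam CPM by (intro mult_left_mono) auto
    then have XC: "P ^ n * C * M \<le> X" unfolding X_def by (simp add: ac_simps)
    have X1: "1 \<le> X" using XC CPM by linarith
    have mX: "m powr p \<le> X" using mp XC by (simp add: ac_simps)
    define q where "q = real n + p"
    have qneg: "q < 0" unfolding q_def using Pn P_def by simp
    have eneg: "1 / q \<le> 0" using qneg by simp
    have goal: "X powr (1 / q) \<le> m"
    proof (cases "1 \<le> m")
      case True
      have "X powr (1 / q) \<le> X powr 0" using eneg X1 by (rule powr_mono)
      then show ?thesis using X1 True by simp
    next
      case False
      have "m powr q = m powr (real n) * m powr p" unfolding q_def by (rule powr_add)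
      also have "m powr (real n) = m ^ n" using mpos by (rule powr_realpow)
      also have "m ^ n \<le> 1" using mpos False by (intro power_le_one) auto
      then have "m ^ n * m powr p \<le> 1 * m powr p" by (intro mult_right_mono) auto
      finally have mq: "m powr q \<le> X" using mX by simp
      have mqpos: "0 < m powr q" using mpos by simp
      have "X powr (1 / q) \<le> (m powr q) powr (1 / q)" using powr_mono2'[OF eneg mqpos mq] .
      also have "\<dots> = m" using qneg mpos by (simp add: powr_powr)
      finally show ?thesis .
    qed
    show "support_fun \<Omega> x0 \<ge> ((-p) ^ (DIM('a) - 1) * C * gamma_max S *
          ((SUP y\<in>usphere. f y) / (INF y\<in>usphere. f y))) powr (1 / (real (DIM('a) - 1) + p))"
      using goal unfolding X_def M_def q_def m_def P_def n_def .
  qed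
qed

end
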